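(* For every $d\ge 2$, every $A\in\mathcal C^{d-1}$ and every $p\in[1,\infty)$, $$\max_{C_1,C_2\in\mathcal C^d_A}\|r_{C_1}-r_{C_2}\|_{A,p}=(p+1)^{-1/p}.$$
   Context: $\mathbb I=[0,1]$, $\lambda$ Lebesgue measure. A $d$-copula $C\in\mathcal C^d$ is the distribution function on $\mathbb I^d$ of a probability measure $\mu_C$ with uniform univariate marginals; points are $(\mathbf x,y)$, $\mathbf x\in\mathbb I^{d-1}$. $C_{1:(d-1)}$ is the marginal copula of the first $d-1$ coordinates. For $A\in\mathcal C^{d-1}$, $\mathcal C^d_A=\{C\in\mathcal C^d: C_{1:(d-1)}=A\}$; for $d=2$, $\mu_A=\lambda$ and $\mathcal C^2_A=\mathcal C^2$. $K_C$ is the Markov kernel of $C$ w.r.t. the first $d-1$ coordinates: $\mu_C(B\times F)=\int_B K_C(\mathbf x,F)\,\mathrm d\mu_{C_{1:(d-1)}}(\mathbf x)$. Regression function $r_C(\mathbf x)=\int y\,K_C(\mathbf x,\mathrm dy)$. $\|f\|_{A,p}=(\int_{\mathbb I^{d-1}}|f|^p\,\mathrm d\mu_A)^{1/p}$. *)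

theory Defs
  imports "HOL-Probability.Probability"
begin

definition unif01 :: "real measure" where
  "unif01 = density lborel (indicator {0..1})"

text \<open>A copula on I^k is identified with its probability measure mu_C (on Borel sets)
  having uniform univariate marginals.  Points of I^(d-1) are vectors of type real^'n
  (so CARD('n) = d - 1 >= 1, i.e. d >= 2).\<close>
definition copula_measure_vec :: "(real ^ 'n) measure \<Rightarrow> bool" where
  "copula_measure_vec A \<longleftrightarrow> sets A = sets borel \<and> prob_space A \<and>
     (\<forall>i. distr A lborel (\<lambda>x. x $ i) = unif01)"

definition copula_measure :: "((real ^ 'n) \<times> real) measure \<Rightarrow> bool" where
  "copula_measure C \<longleftrightarrow> sets C = sets borel \<and> prob_space C \<and>
     (\<forall>i. distr C lborel (\<lambda>z. fst z $ i) = unif01) \<and>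
     distr C lborel snd = unif01"

definition marg_first :: "((real ^ 'n) \<times> real) measure \<Rightarrow> (real ^ 'n) measure" where
  "marg_first C = distr C borel fst"

definition copulas_with_marg :: "(real ^ 'n) measure \<Rightarrow> ((real ^ 'n) \<times> real) measure set" where
  "copulas_with_marg A = {C. copula_measure C \<and> marg_first C = A}"

definition markov_kernel_of :: "((real ^ 'n) \<times> real) measure \<Rightarrow> (real ^ 'n \<Rightarrow> real measure) \<Rightarrow> bool" where
  "markov_kernel_of C K \<longleftrightarrow> K \<in> borel \<rightarrow>\<^sub>M prob_algebra borel \<and>
     (\<forall>B \<in> sets borel. \<forall>F \<in> sets borel.
        emeasure C (B \<times> F) = (\<integral>\<^sup>+ x. indicator B x * emeasure (K x) F \<partial>(marg_first C)))"

definition regression :: "(real ^ 'n \<Rightarrow> real measure) \<Rightarrow> real ^ 'n \<Rightarrow> real" where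
  "regression K x = (\<integral> y. y \<partial>(K x))"

definition Lp_norm_A :: "(real ^ 'n) measure \<Rightarrow> real \<Rightarrow> (real ^ 'n \<Rightarrow> real) \<Rightarrow> real" where
  "Lp_norm_A A p f = (enn2real (\<integral>\<^sup>+ x. ennreal (\<bar>f x\<bar> powr p) \<partial>A)) powr (1 / p)"

end

theory Submission
  imports Defs
begin

lemma lborel_reflect: "distr lborel borel (\<lambda>y::real. 1 - y) = lborel"
proof -
  have "lborel = density (distr lborel borel (\<lambda>x::real. 1 + (-1) * x)) (\<lambda>_. ennreal \<bar>-1\<bar>)"
    by (rule lborel_real_affine) simp
  then show ?thesis by (simp add: density_1 one_ennreal_def[symmetric])
qed

lemma unif01_reflect: "distr unif01 lborel (\<lambda>y::real. 1 - y) = unif01"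
proof (rule measure_eqI)
  show "sets (distr unif01 lborel (\<lambda>y::real. 1 - y)) = sets unif01" by (simp add: unif01_def)
  fix S assume S: "S \<in> sets (distr unif01 lborel (\<lambda>y::real. 1 - y))"
  then have Sb[measurable]: "S \<in> sets borel" by simp
  have mf: "(\<lambda>y::real. 1 - y) \<in> borel_measurable borel" by measurable
  have "emeasure (distr unif01 lborel (\<lambda>y::real. 1 - y)) S = emeasure unif01 ((\<lambda>y. 1 - y) -` S)"
    using measurable_sets_borel[OF mf Sb] by (subst emeasure_distr) (simp_all add: unif01_def)
  also have "\<dots> = (\<integral>\<^sup>+ y. indicator {0..1} y * indicator ((\<lambda>y. 1 - y) -` S) y \<partial>lborel)"
    unfolding unif01_def using measurable_sets_borel[OF mf Sb] by (subst emeasure_density) auto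
  also have "\<dots> = (\<integral>\<^sup>+ y. (\<lambda>u. indicator {0..1::real} u * indicator S u) (1 - y) \<partial>lborel)"
    by (intro nn_integral_cong) (auto simp: indicator_def)
  also have "\<dots> = (\<integral>\<^sup>+ u. indicator {0..1::real} u * indicator S u \<partial>distr lborel borel (\<lambda>y::real. 1 - y))"
    by (subst nn_integral_distr) auto
  also have "\<dots> = emeasure unif01 S"
    unfolding lborel_reflect unif01_def by (subst emeasure_density) auto
  finally show "emeasure (distr unif01 lborel (\<lambda>y::real. 1 - y)) S = emeasure unif01 S" .
qed

lemma powr_abs_int:
  assumes p: "1 \<le> p"
  shows "((\<lambda>y::real. \<bar>2*y - 1\<bar> powr p) has_integral 1/(p+1)) {0..1}"
proof -
  have base: "((\<lambda>x::real. x powr p) has_integral (1/(p+1))) {0..1}"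
    using has_integral_powr_from_0[of p 1] p by simp
  then have base: "((\<lambda>x::real. x powr p) has_integral (1/(p+1))) (cbox 0 1)" by simp
  have r: "((\<lambda>x::real. (2*x + -1) powr p) has_integral (1/\<bar>2\<bar> ^ DIM(real)) *\<^sub>R (1/(p+1)))
      ((\<lambda>x. (1/2) *\<^sub>R x + -((1/2) *\<^sub>R (-1))) ` {0..1})"
    using has_integral_affinity[OF base, of 2 "-1"] by simp
  have img1: "((\<lambda>x::real. (1/2) *\<^sub>R x + -((1/2) *\<^sub>R (-1))) ` {0..1}) = {1/2..1}"
    by (auto simp: image_iff field_simps intro!: bexI[where x="2*_ - 1"])
  have l: "((\<lambda>x::real. (-2*x + 1) powr p) has_integral (1/\<bar>-2\<bar> ^ DIM(real)) *\<^sub>R (1/(p+1)))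
      ((\<lambda>x. (1/(-2)) *\<^sub>R x + -((1/(-2)) *\<^sub>R 1)) ` {0..1})"
    using has_integral_affinity[OF base, of "-2" 1] by simp
  have img2: "((\<lambda>x::real. (1/(-2)) *\<^sub>R x + -((1/(-2)) *\<^sub>R 1)) ` {0..1}) = {0..1/2}"
    by (auto simp: image_iff field_simps intro!: bexI[where x="1 - 2*_"])
  have r2: "((\<lambda>y::real. \<bar>2*y - 1\<bar> powr p) has_integral 1/(2*(p+1))) {1/2..1}"
  proof -
    have "((\<lambda>x. (2*x + -1) powr p) has_integral 1/(2*(p+1))) {1/2..1}" using r img1 by simp
    then show ?thesis by (rule has_integral_cong[THEN iffD1, rotated]) auto
  qed
  have l2: "((\<lambda>y::real. \<bar>2*y - 1\<bar> powr p) has_integral 1/(2*(p+1))) {0..1/2}"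
  proof -
    have "((\<lambda>x. (-2*x + 1) powr p) has_integral 1/(2*(p+1))) {0..1/2}" using l img2 by simp
    then show ?thesis by (rule has_integral_cong[THEN iffD1, rotated]) auto
  qed
  have "((\<lambda>y::real. \<bar>2*y - 1\<bar> powr p) has_integral (1/(2*(p+1)) + 1/(2*(p+1)))) {0..1}"
    by (rule has_integral_combine[OF _ _ l2 r2]) auto
  moreover have "1/(2*(p+1)) + 1/(2*(p+1)) = 1/(p+1)" using p by (simp add: field_simps)
  ultimately show ?thesis by simp
qed


lemma unif_powr_nn:
  assumes p: "1 \<le> p"
  shows "(\<integral>\<^sup>+ y. ennreal (\<bar>2*y-1\<bar> powr p) \<partial>unif01) = ennreal (1/(p+1))"
proof -
  have "(\<integral>\<^sup>+ y. ennreal (\<bar>2*y-1\<bar> powr p) \<partial>unif01)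
      = (\<integral>\<^sup>+ y. indicator {0..1} y * ennreal (\<bar>2*y-1\<bar> powr p) \<partial>lborel)"
    unfolding unif01_def by (subst nn_integral_density) auto
  also have "\<dots> = (\<integral>\<^sup>+ y. ennreal (indicator {0..1} y * \<bar>2*y-1\<bar> powr p) \<partial>lborel)"
    by (intro nn_integral_cong) (auto simp: indicator_def)
  also have "\<dots> = ennreal (1/(p+1))"
  proof (rule nn_integral_has_integral_lborel)
    show "((\<lambda>y::real. indicator {0..1} y * \<bar>2*y-1\<bar> powr p) has_integral 1/(p+1)) UNIV"
      using has_integral_restrict_UNIV[THEN iffD2, OF powr_abs_int[OF p]]
      by (rule has_integral_cong[THEN iffD1, rotated]) (simp add: indicator_def)
  next
    show "(\<lambda>y::real. indicator {0..1} y * \<bar>2*y-1\<bar> powr p) \<in> borel_measurable borel" by measurable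
  next
    fix y :: real show "0 \<le> indicator {0..1} y * \<bar>2*y-1\<bar> powr p" by simp
  qed
  finally show ?thesis .
qed

lemma unif_powr_int:
  assumes p: "1 \<le> p"
  shows "(\<integral> y. \<bar>2*y-1\<bar> powr p \<partial>unif01) = 1/(p+1)"
proof -
  have "(\<integral> y. \<bar>2*y-1\<bar> powr p \<partial>unif01) = enn2real (\<integral>\<^sup>+ y. ennreal (\<bar>2*y-1\<bar> powr p) \<partial>unif01)"
    by (rule integral_eq_nn_integral) (auto simp: unif01_def)
  also have "\<dots> = 1/(p+1)" using p by (simp add: unif_powr_nn)
  finally show ?thesis .
qed


lemma sets_marg_first[simp, measurable_cong]: "sets (marg_first C) = sets borel"
  by (simp add: marg_first_def)

definition kpair :: "('a::topological_space \<Rightarrow> 'b::topological_space measure) \<Rightarrow> 'a \<Rightarrow> ('a \<times> 'b) measure" where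
  "kpair K x = distr (K x) (borel \<Otimes>\<^sub>M borel) (\<lambda>y. (x, y))"

lemma kpair_meas:
  assumes "K \<in> M \<rightarrow>\<^sub>M prob_algebra borel" "sets M = sets borel"
  shows "kpair K \<in> M \<rightarrow>\<^sub>M prob_algebra (borel \<Otimes>\<^sub>M borel)"
  unfolding kpair_def
proof (rule measurable_distr_prob_space2[OF assms(1)])
  show "(\<lambda>(x, y). (x, y)) \<in> M \<Otimes>\<^sub>M borel \<rightarrow>\<^sub>M borel \<Otimes>\<^sub>M borel"
    using assms(2) by (simp add: measurable_cong_sets[OF sets_pair_measure_cong[OF assms(2) refl] refl])
qed

lemma mk_meas:
  assumes "markov_kernel_of C K"
  shows "K \<in> marg_first C \<rightarrow>\<^sub>M prob_algebra borel"
  using assms unfolding markov_kernel_of_def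
  by (simp add: measurable_cong_sets[OF sets_marg_first refl])

lemma marg_prob:
  assumes "copula_measure C" shows "prob_space (marg_first C)"
proof -
  have "fst \<in> C \<rightarrow>\<^sub>M borel"
    using assms unfolding copula_measure_def
    by (simp add: measurable_cong_sets[of C borel, OF _ refl] borel_prod[symmetric])
  then show ?thesis using assms unfolding copula_measure_def marg_first_def
    by (auto intro!: prob_space.prob_space_distr)
qed

lemma disint:
  fixes C :: "((real^'n) \<times> real) measure"
  assumes cop: "copula_measure C" and mk: "markov_kernel_of C K"
  shows "C = bind (marg_first C) (kpair K)"
proof -
  let ?M = "marg_first C"
  have KM: "K \<in> ?M \<rightarrow>\<^sub>M prob_algebra borel" by (rule mk_meas[OF mk])
  have NM: "kpair K \<in> ?M \<rightarrow>\<^sub>M prob_algebra (borel \<Otimes>\<^sub>M borel)"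
    by (rule kpair_meas[OF KM]) simp
  have Min: "?M \<in> space (prob_algebra ?M)"
    using marg_prob[OF cop] by (simp add: space_prob_algebra)
  have setsC: "sets C = sets borel" using cop by (simp add: copula_measure_def)
  have probC: "prob_space C" using cop by (simp add: copula_measure_def)
  let ?E = "{a \<times> b | a b. a \<in> sets (borel::(real^'n) measure) \<and> b \<in> sets (borel::real measure)}"
  have sig: "sets (borel::((real^'n) \<times> real) measure) = sigma_sets UNIV ?E"
    by (subst borel_prod[symmetric]) (simp add: sets_pair_measure)
  show ?thesis
  proof (rule measure_eqI_generator_eq[where E="?E" and \<Omega>=UNIV and A="\<lambda>_. UNIV"])
    show "Int_stable ?E" by (rule Int_stable_pair_measure_generator)
    show "?E \<subseteq> Pow UNIV" by auto
    show "sets C = sigma_sets UNIV ?E" using setsC sig by simp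
    show "sets (?M \<bind> kpair K) = sigma_sets UNIV ?E"
    proof -
      have "sets (?M \<bind> kpair K) = sets (borel \<Otimes>\<^sub>M borel)" by (rule sets_bind'[OF Min NM])
      also have "\<dots> = sigma_sets UNIV ?E" by (simp add: sets_pair_measure)
      finally show ?thesis .
    qed
    show "range (\<lambda>_. UNIV) \<subseteq> ?E" by (auto intro!: exI[of _ UNIV])
    show "(\<Union>i::nat. UNIV) = UNIV" by simp
    show "emeasure C UNIV \<noteq> \<infinity>" for i::nat
    proof -
      have "space C = UNIV" using sets_eq_imp_space_eq[OF setsC] by simp
      then show ?thesis using prob_space.emeasure_space_1[OF probC] by simp
    qed
  next
    fix X assume "X \<in> ?E"
    then obtain a b where X: "X = a \<times> b" and a: "a \<in> sets borel" and b: "b \<in> sets borel" by auto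
    have "emeasure (?M \<bind> kpair K) X = (\<integral>\<^sup>+ x. emeasure (kpair K x) X \<partial>?M)"
      by (rule emeasure_bind_prob_algebra[OF Min NM]) (simp add: X a b)
    also have "\<dots> = (\<integral>\<^sup>+ x. indicator a x * emeasure (K x) b \<partial>?M)"
    proof (rule nn_integral_cong)
      fix x assume x: "x \<in> space ?M"
      then have "K x \<in> space (prob_algebra borel)" using measurable_space[OF KM] by auto
      then have sK: "sets (K x) = sets borel" by (simp add: space_prob_algebra)
      then have spK: "space (K x) = UNIV" using sets_eq_imp_space_eq[of "K x" borel] by simp
      have mp: "(\<lambda>y. (x, y)) \<in> K x \<rightarrow>\<^sub>M borel \<Otimes>\<^sub>M borel"
        by (simp add: measurable_cong_sets[OF sK refl])
      have "emeasure (kpair K x) X = emeasure (K x) ((\<lambda>y. (x, y)) -` X \<inter> space (K x))"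
        unfolding kpair_def by (rule emeasure_distr[OF mp]) (simp add: X a b)
      also have "(\<lambda>y. (x, y)) -` X \<inter> space (K x) = (if x \<in> a then b else {})"
        using spK X by auto
      finally show "emeasure (kpair K x) X = indicator a x * emeasure (K x) b"
        by (simp add: indicator_def)
    qed
    also have "\<dots> = emeasure C X"
      using mk a b X unfolding markov_kernel_of_def by simp
    finally show "emeasure C X = emeasure (?M \<bind> kpair K) X" by simp
  qed
qed


lemma kx_sets:
  assumes mk: "markov_kernel_of C K"
  shows "sets (K x) = sets borel" "space (K x) = UNIV" "prob_space (K x)"
proof -
  have "K x \<in> space (prob_algebra borel)"
    using mk unfolding markov_kernel_of_def by (auto intro: measurable_space)
  then show s: "sets (K x) = sets borel" and "prob_space (K x)" by (auto simp: space_prob_algebra)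
  from s show "space (K x) = UNIV" using sets_eq_imp_space_eq[of "K x" borel] by simp
qed

lemma disint_integral:
  fixes C :: "((real^'n) \<times> real) measure" and f :: "(real^'n) \<times> real \<Rightarrow> real"
  assumes cop: "copula_measure C" and mk: "markov_kernel_of C K"
    and fm: "f \<in> borel_measurable borel" and fb: "\<And>z. \<bar>f z\<bar> \<le> B"
  shows "(\<integral> z. f z \<partial>C) = (\<integral> x. (\<integral> y. f (x, y) \<partial>K x) \<partial>marg_first C)"
proof -
  let ?M = "marg_first C"
  have KM: "K \<in> ?M \<rightarrow>\<^sub>M prob_algebra borel" by (rule mk_meas[OF mk])
  have NM: "kpair K \<in> ?M \<rightarrow>\<^sub>M prob_algebra (borel \<Otimes>\<^sub>M borel)"
    by (rule kpair_meas[OF KM]) simp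
  have fm': "f \<in> borel_measurable (borel \<Otimes>\<^sub>M borel)" using fm by (simp add: borel_prod)
  have fin: "finite_measure ?M" using marg_prob[OF cop] by (simp add: prob_space_def)
  have "(\<integral> z. f z \<partial>C) = (\<integral> z. f z \<partial>(?M \<bind> kpair K))" using disint[OF cop mk] by simp
  also have "\<dots> = (\<integral> x. integral\<^sup>L (kpair K x) f \<partial>?M)"
  proof (rule integral_bind[OF fm' _ measurable_prob_algebraD[OF NM] fin, where B=B and B'=1])
    show "\<bar>f x\<bar> \<le> B" for x using fb .
    show "AE x in ?M. emeasure (kpair K x) (space (kpair K x)) \<le> ennreal 1"
    proof (rule AE_I2)
      fix x assume "x \<in> space ?M"
      have "prob_space (kpair K x)" unfolding kpair_def
        using kx_sets[OF mk, of x]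
        by (auto intro!: prob_space.prob_space_distr simp: measurable_cong_sets[OF kx_sets(1)[OF mk] refl])
      then show "emeasure (kpair K x) (space (kpair K x)) \<le> ennreal 1"
        by (simp add: prob_space.emeasure_space_1)
    qed
  qed
  also have "\<dots> = (\<integral> x. (\<integral> y. f (x, y) \<partial>K x) \<partial>?M)"
  proof (rule Bochner_Integration.integral_cong[OF refl])
    fix x
    have mp: "(\<lambda>y. (x, y)) \<in> K x \<rightarrow>\<^sub>M borel \<Otimes>\<^sub>M borel"
      by (simp add: measurable_cong_sets[OF kx_sets(1)[OF mk] refl])
    show "integral\<^sup>L (kpair K x) f = (\<integral> y. f (x, y) \<partial>K x)"
      unfolding kpair_def by (rule integral_distr[OF mp fm'])
  qed
  finally show ?thesis .
qed

lemma support_Y: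
  fixes C :: "((real^'n) \<times> real) measure"
  assumes cop: "copula_measure C"
  shows "AE z in C. snd z \<in> {0..1}"
proof -
  have sC: "sets C = sets borel" using cop by (simp add: copula_measure_def)
  have sm: "snd \<in> C \<rightarrow>\<^sub>M lborel"
    using sC by (simp add: measurable_cong_sets[of C borel, OF _ refl] borel_prod[symmetric])
  have "AE y in unif01. y \<in> {0..1}"
    unfolding unif01_def by (subst AE_density) (auto simp: indicator_def)
  moreover have e2: "distr C lborel snd = unif01" using cop by (simp add: copula_measure_def)
  ultimately have "AE y in distr C lborel snd. y \<in> {0..1}" by (simp only: e2)
  then show ?thesis by (subst (asm) AE_distr_iff[OF sm]) auto
qed

lemma support_K:
  fixes C :: "((real^'n) \<times> real) measure"
  assumes cop: "copula_measure C" and mk: "markov_kernel_of C K"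
  shows "AE x in marg_first C. AE y in K x. y \<in> {0..1}"
proof -
  let ?M = "marg_first C"
  have KM: "K \<in> ?M \<rightarrow>\<^sub>M prob_algebra borel" by (rule mk_meas[OF mk])
  have NM: "kpair K \<in> ?M \<rightarrow>\<^sub>M prob_algebra (borel \<Otimes>\<^sub>M borel)"
    by (rule kpair_meas[OF KM]) simp
  have e: "?M \<bind> kpair K = C" using disint[OF cop mk] by simp
  have P: "Measurable.pred (borel \<Otimes>\<^sub>M borel) (\<lambda>z::(real^'n) \<times> real. snd z \<in> {0..1})"
    by measurable
  have "AE z in ?M \<bind> kpair K. snd z \<in> {0..1}"
    unfolding e by (rule support_Y[OF cop])
  then have "AE x in ?M. AE z in kpair K x. snd z \<in> {0..1}"
    using AE_bind[OF measurable_prob_algebraD[OF NM] P] by blast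
  then show ?thesis
  proof (rule AE_mp[OF _ AE_I2], intro impI)
    fix x assume a: "AE z in kpair K x. snd z \<in> {0..1}"
    have mp: "(\<lambda>y. (x, y)) \<in> K x \<rightarrow>\<^sub>M borel \<Otimes>\<^sub>M borel"
      by (simp add: measurable_cong_sets[OF kx_sets(1)[OF mk] refl])
    have S: "{z \<in> space (borel \<Otimes>\<^sub>M borel). snd z \<in> {0..1::real}} \<in> sets (borel \<Otimes>\<^sub>M borel :: ((real^'n) \<times> real) measure)"
      by measurable
    have "AE y in K x. snd (x, y) \<in> {0..1}"
      using AE_distr_iff[OF mp S] a unfolding kpair_def by blast
    then show "AE y in K x. y \<in> {0..1}" by simp
  qed
qed


definition ry :: "real \<Rightarrow> real" where "ry y = max 0 (min 1 y)"
definition RK :: "('a \<Rightarrow> real measure) \<Rightarrow> 'a \<Rightarrow> real" where "RK K x = (\<integral> y. ry y \<partial>K x)"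
definition gg :: "real \<Rightarrow> real \<Rightarrow> real" where "gg p d = sgn d * \<bar>d\<bar> powr (p - 1)"

lemma ry_bounds: "0 \<le> ry y" "ry y \<le> 1" by (auto simp: ry_def)
lemma ry_meas[measurable]: "ry \<in> borel_measurable borel" unfolding ry_def by measurable

lemma gg_meas[measurable]: "gg p \<in> borel_measurable borel" unfolding gg_def by measurable

lemma gg_mult: "gg p d * d = \<bar>d\<bar> powr p"
proof (cases "d = 0")
  case False
  then have "\<bar>d\<bar> powr (p - 1) * \<bar>d\<bar> = \<bar>d\<bar> powr p"
    by (simp add: powr_diff field_simps)
  then show ?thesis using False by (auto simp: gg_def sgn_if)
qed (simp add: gg_def)

lemma gg_bound:
  assumes "1 \<le> p" "\<bar>d\<bar> \<le> 1" shows "\<bar>gg p d\<bar> \<le> 1"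
proof -
  have "\<bar>d\<bar> powr (p - 1) \<le> 1"
    using assms by (cases "d = 0") (auto intro!: powr_le1)
  then show ?thesis by (auto simp: gg_def sgn_if abs_mult)
qed

lemma young_step:
  assumes p: "1 \<le> p"
  shows "gg p d * w \<le> (1 - 1/p)/2 * \<bar>d\<bar> powr p + 1/(2*p) * \<bar>2*w\<bar> powr p"
proof (cases "p = 1")
  case True
  have "gg p d * w \<le> \<bar>w\<bar>"
    using True by (auto simp: gg_def sgn_if)
  also have "\<bar>w\<bar> = (1 - 1/p)/2 * \<bar>d\<bar> powr p + 1/(2*p) * \<bar>2*w\<bar> powr p"
    using True by (simp add: abs_mult)
  finally show ?thesis .
next
  case False
  with p have p1: "p > 1" by simp
  define q where "q = p / (p - 1)"
  have q1: "q > 1" using p1 by (simp add: q_def field_simps)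
  have pq: "1/q + 1/p = 1" using p1 by (simp add: q_def field_simps)
  have a: "gg p d * w \<le> \<bar>d\<bar> powr (p - 1) * \<bar>w\<bar>"
    by (auto simp: gg_def sgn_if abs_mult intro: mult_right_mono order.trans[OF _ abs_ge_self])
  have b: "\<bar>d\<bar> powr (p - 1) * \<bar>2*w\<bar> \<le> (\<bar>d\<bar> powr (p - 1)) powr q / q + \<bar>2*w\<bar> powr p / p"
    by (rule Youngs_inequality[OF q1 p1 pq]) auto
  have c: "(\<bar>d\<bar> powr (p - 1)) powr q = \<bar>d\<bar> powr p"
    using p1 by (simp add: powr_powr q_def)
  have e: "1/q = 1 - 1/p" using pq by simp
  have "\<bar>d\<bar> powr (p - 1) * \<bar>w\<bar> = (\<bar>d\<bar> powr (p - 1) * \<bar>2*w\<bar>) / 2" by (simp add: abs_mult)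
  also have "\<dots> \<le> ((\<bar>d\<bar> powr (p - 1)) powr q / q + \<bar>2*w\<bar> powr p / p) / 2"
    using b by simp
  also have "\<dots> = (1 - 1/p)/2 * \<bar>d\<bar> powr p + 1/(2*p) * \<bar>2*w\<bar> powr p"
    unfolding c using p1 by (simp add: q_def field_simps)
  finally show ?thesis using a by linarith
qed


lemma RK_bounds:
  assumes mk: "markov_kernel_of C K"
  shows "0 \<le> RK K x" "RK K x \<le> 1"
proof -
  interpret prob_space "K x" using kx_sets[OF mk] by simp
  have sK: "sets (K x) = sets borel" using kx_sets[OF mk] by simp
  have m: "ry \<in> borel_measurable (K x)" by (simp add: measurable_cong_sets[OF sK refl])
  have i: "integrable (K x) ry"
    by (rule integrable_const_bound[where B=1]) (auto simp: ry_bounds m abs_le_iff intro: order.trans[OF _ ry_bounds(2)])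
  show "0 \<le> RK K x" unfolding RK_def by (rule Bochner_Integration.integral_nonneg) (simp add: ry_bounds)
  show "RK K x \<le> 1" unfolding RK_def by (rule integral_le_const[OF i]) (simp add: ry_bounds)
qed

lemma RK_meas[measurable]:
  assumes mk: "markov_kernel_of C K"
  shows "RK K \<in> borel_measurable borel"
proof -
  have K: "K \<in> borel \<rightarrow>\<^sub>M subprob_algebra borel"
    using mk unfolding markov_kernel_of_def by (auto intro: measurable_prob_algebraD)
  have "(\<lambda>x. (\<lambda>M. integral\<^sup>L M ry) (K x)) \<in> borel_measurable borel"
    by (rule measurable_compose[OF K integral_measurable_subprob_algebra[OF ry_meas]])
  then show ?thesis unfolding RK_def by simp
qed

lemma reg_eq_RK:
  fixes C :: "((real^'n) \<times> real) measure"
  assumes cop: "copula_measure C" and mk: "markov_kernel_of C K"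
  shows "AE x in marg_first C. regression K x = RK K x"
  using support_K[OF cop mk]
proof (rule AE_mp[OF _ AE_I2], intro impI)
  fix x assume ae: "AE y in K x. y \<in> {0..1}"
  have sK: "sets (K x) = sets borel" using kx_sets[OF mk] by simp
  show "regression K x = RK K x"
    unfolding regression_def RK_def
    by (rule integral_cong_AE) (auto simp: measurable_cong_sets[OF sK refl] ry_def
        intro!: AE_mp[OF ae AE_I2])
qed

lemma side_bound:
  fixes C :: "((real^'n) \<times> real) measure"
  assumes cop: "copula_measure C" and mk: "markov_kernel_of C K" and p: "1 \<le> p"
    and hm: "h \<in> borel_measurable borel" and hb: "\<And>x. \<bar>h x\<bar> \<le> 1"
    and fm: "\<phi> \<in> borel_measurable borel" and fb: "\<And>x. 0 \<le> \<phi> x \<and> \<phi> x \<le> 1"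
    and c: "0 \<le> c1" "0 \<le> c2"
    and yo: "\<And>x w. h x * w \<le> c1 * \<phi> x + c2 * \<bar>2*w\<bar> powr p"
  shows "(\<integral> x. h x * (RK K x - 1/2) \<partial>marg_first C) \<le> c1 * (\<integral> x. \<phi> x \<partial>marg_first C) + c2 * (1/(p+1))"
proof -
  have sC: "sets C = sets borel" using cop by (simp add: copula_measure_def)
  interpret prob_space C using cop by (simp add: copula_measure_def)
  have fstm[measurable]: "fst \<in> C \<rightarrow>\<^sub>M borel" and sndm[measurable]: "snd \<in> C \<rightarrow>\<^sub>M borel"
    using sC by (simp_all add: measurable_cong_sets[of C borel, OF _ refl] borel_prod[symmetric])
  have sndm': "snd \<in> C \<rightarrow>\<^sub>M lborel" using sndm by simp
  have f1m: "(\<lambda>z. h (fst z) * (ry (snd z) - 1/2)) \<in> borel_measurable (borel :: ((real^'n) \<times> real) measure)"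
    unfolding borel_prod[symmetric] using hm by measurable
  have "(\<integral> x. h x * (RK K x - 1/2) \<partial>marg_first C) = (\<integral> x. (\<integral> y. h (fst (x,y)) * (ry (snd (x,y)) - 1/2) \<partial>K x) \<partial>marg_first C)"
  proof (rule Bochner_Integration.integral_cong[OF refl])
    fix x
    interpret K: prob_space "K x" using kx_sets[OF mk] by simp
    have sK: "sets (K x) = sets borel" using kx_sets[OF mk] by simp
    have m: "ry \<in> borel_measurable (K x)" by (simp add: measurable_cong_sets[OF sK refl])
    have i: "integrable (K x) ry"
      by (rule K.integrable_const_bound[where B=1]) (auto simp: ry_bounds m abs_le_iff intro: order.trans[OF _ ry_bounds(2)])
    have "(\<integral> y. h x * (ry y - 1/2) \<partial>K x) = h x * (\<integral> y. (ry y - 1/2) \<partial>K x)"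
      by simp
    also have "(\<integral> y. (ry y - 1/2) \<partial>K x) = RK K x - 1/2"
      unfolding RK_def using i by (simp add: K.prob_space)
    finally show "h x * (RK K x - 1/2) = (\<integral> y. h (fst (x,y)) * (ry (snd (x,y)) - 1/2) \<partial>K x)" by (simp only: fst_conv snd_conv)
  qed
  also have "\<dots> = (\<integral> z. h (fst z) * (ry (snd z) - 1/2) \<partial>C)"
  proof (rule disint_integral[OF cop mk f1m, symmetric, where B=1])
    fix z :: "(real^'n) \<times> real"
    have "\<bar>ry (snd z) - 1/2\<bar> \<le> 1" using ry_bounds[of "snd z"] by auto
    then show "\<bar>h (fst z) * (ry (snd z) - 1/2)\<bar> \<le> 1"
      using hb[of "fst z"] by (simp add: abs_mult mult_le_one)
  qed
  also have "\<dots> \<le> (\<integral> z. c1 * \<phi> (fst z) + c2 * \<bar>2 * ry (snd z) - 1\<bar> powr p \<partial>C)"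
  proof (rule integral_mono)
    show "integrable C (\<lambda>z. h (fst z) * (ry (snd z) - 1/2))"
    proof (rule integrable_const_bound[where B=1])
      show "AE z in C. norm (h (fst z) * (ry (snd z) - 1/2)) \<le> 1"
      proof (rule AE_I2)
        fix z :: "(real^'n) \<times> real"
        have "\<bar>ry (snd z) - 1/2\<bar> \<le> 1" using ry_bounds[of "snd z"] by auto
        then show "norm (h (fst z) * (ry (snd z) - 1/2)) \<le> 1"
          using hb[of "fst z"] by (simp add: abs_mult mult_le_one)
      qed
    qed (use hm in measurable)
    show "integrable C (\<lambda>z. c1 * \<phi> (fst z) + c2 * \<bar>2 * ry (snd z) - 1\<bar> powr p)"
    proof (rule integrable_const_bound[where B="c1 + c2"])
      show "AE z in C. norm (c1 * \<phi> (fst z) + c2 * \<bar>2 * ry (snd z) - 1\<bar> powr p) \<le> c1 + c2"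
      proof (rule AE_I2)
        fix z :: "(real^'n) \<times> real"
        have "\<bar>2 * ry (snd z) - 1\<bar> \<le> 1" using ry_bounds[of "snd z"] by auto
        then have a: "\<bar>2 * ry (snd z) - 1\<bar> powr p \<le> 1" using p by (intro powr_le1) auto
        have "c1 * \<phi> (fst z) \<le> c1" using fb[of "fst z"] c by (simp add: mult_left_le)
        moreover have "c2 * \<bar>2 * ry (snd z) - 1\<bar> powr p \<le> c2" using a c by (simp add: mult_left_le)
        moreover have "0 \<le> c1 * \<phi> (fst z)" using fb[of "fst z"] c by simp
        moreover have "0 \<le> c2 * \<bar>2 * ry (snd z) - 1\<bar> powr p" using c by simp
        ultimately show "norm (c1 * \<phi> (fst z) + c2 * \<bar>2 * ry (snd z) - 1\<bar> powr p) \<le> c1 + c2"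
          by simp
      qed
    qed (use fm in measurable)
    fix z :: "(real^'n) \<times> real"
    show "h (fst z) * (ry (snd z) - 1/2) \<le> c1 * \<phi> (fst z) + c2 * \<bar>2 * ry (snd z) - 1\<bar> powr p"
      using yo[of "fst z" "ry (snd z) - 1/2"] by (simp add: algebra_simps)
  qed
  also have "\<dots> = c1 * (\<integral> z. \<phi> (fst z) \<partial>C) + c2 * (\<integral> z. \<bar>2 * ry (snd z) - 1\<bar> powr p \<partial>C)"
  proof -
    have i1: "integrable C (\<lambda>z. \<phi> (fst z))"
      by (rule integrable_const_bound[where B=1]) (use fb fm in auto)
    have i2: "integrable C (\<lambda>z. \<bar>2 * ry (snd z) - 1\<bar> powr p)"
    proof (rule integrable_const_bound[where B=1])
      show "AE z in C. norm (\<bar>2 * ry (snd z) - 1\<bar> powr p) \<le> 1"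
      proof (rule AE_I2)
        fix z :: "(real^'n) \<times> real"
        have "\<bar>2 * ry (snd z) - 1\<bar> \<le> 1" using ry_bounds[of "snd z"] by auto
        then show "norm (\<bar>2 * ry (snd z) - 1\<bar> powr p) \<le> 1" using p by (simp, intro powr_le1) auto
      qed
    qed measurable
    show ?thesis using i1 i2 by simp
  qed
  also have "(\<integral> z. \<phi> (fst z) \<partial>C) = (\<integral> x. \<phi> x \<partial>marg_first C)"
    unfolding marg_first_def by (rule integral_distr[symmetric]) (use fm in auto)
  also have "(\<integral> z. \<bar>2 * ry (snd z) - 1\<bar> powr p \<partial>C) = 1/(p+1)"
  proof -
    have e2: "distr C lborel snd = unif01" using cop by (simp add: copula_measure_def)
    have "(\<integral> z. \<bar>2 * ry (snd z) - 1\<bar> powr p \<partial>C) = (\<integral> y. \<bar>2 * ry y - 1\<bar> powr p \<partial>distr C lborel snd)"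
      by (rule integral_distr[symmetric, OF sndm']) measurable
    also have "\<dots> = (\<integral> y. \<bar>2 * ry y - 1\<bar> powr p \<partial>unif01)" by (simp only: e2)
    also have "\<dots> = (\<integral> y. \<bar>2 * y - 1\<bar> powr p \<partial>unif01)"
    proof (rule integral_cong_AE)
      show "AE y in unif01. \<bar>2 * ry y - 1\<bar> powr p = \<bar>2 * y - 1\<bar> powr p"
        unfolding unif01_def by (subst AE_density) (auto simp: indicator_def ry_def)
    qed (auto simp: unif01_def)
    also have "\<dots> = 1/(p+1)" by (rule unif_powr_int[OF p])
    finally show ?thesis .
  qed
  finally show ?thesis .
qed


lemma upper:
  fixes A :: "(real^'n) measure"
  assumes vec: "copula_measure_vec A" and p: "1 \<le> p"
    and C1: "C1 \<in> copulas_with_marg A" and C2: "C2 \<in> copulas_with_marg A"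
    and mk1: "markov_kernel_of C1 K1" and mk2: "markov_kernel_of C2 K2"
  shows "Lp_norm_A A p (\<lambda>x. regression K1 x - regression K2 x) \<le> (p + 1) powr (- 1 / p)"
proof -
  have cop1: "copula_measure C1" and m1: "marg_first C1 = A" using C1 by (auto simp: copulas_with_marg_def)
  have cop2: "copula_measure C2" and m2: "marg_first C2 = A" using C2 by (auto simp: copulas_with_marg_def)
  have sA: "sets A = sets borel" using vec by (simp add: copula_measure_vec_def)
  interpret prob_space A using vec by (simp add: copula_measure_vec_def)
  define D where "D x = RK K1 x - RK K2 x" for x
  have Dm[measurable]: "D \<in> borel_measurable borel" unfolding D_def using RK_meas[OF mk1] RK_meas[OF mk2] by measurable
  have DmA: "D \<in> borel_measurable A" using Dm by (simp add: measurable_cong_sets[OF sA refl])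
  have Db: "\<bar>D x\<bar> \<le> 1" for x unfolding D_def using RK_bounds[OF mk1, of x] RK_bounds[OF mk2, of x] by auto
  define c1 where "c1 = (1 - 1/p)/2"
  define c2 where "c2 = 1/(2*p)"
  have c: "0 \<le> c1" "0 \<le> c2" using p by (auto simp: c1_def c2_def)
  define Mv where "Mv = (\<integral> x. \<bar>D x\<bar> powr p \<partial>A)"
  have phim: "(\<lambda>x. \<bar>D x\<bar> powr p) \<in> borel_measurable borel" by measurable
  have phib: "0 \<le> \<bar>D x\<bar> powr p \<and> \<bar>D x\<bar> powr p \<le> 1" for x using Db[of x] p by (auto intro!: powr_le1)
  have h1m: "(\<lambda>x. gg p (D x)) \<in> borel_measurable borel" by measurable
  have h2m: "(\<lambda>x. - gg p (D x)) \<in> borel_measurable borel" by measurable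
  have hb: "\<bar>gg p (D x)\<bar> \<le> 1" for x by (rule gg_bound[OF p Db])
  have s1: "(\<integral> x. gg p (D x) * (RK K1 x - 1/2) \<partial>A) \<le> c1 * Mv + c2 * (1/(p+1))"
    using side_bound[OF cop1 mk1 p h1m hb phim phib c young_step[OF p, of "D _", folded c1_def c2_def]]
    unfolding m1 Mv_def by simp
  have s2: "(\<integral> x. - gg p (D x) * (RK K2 x - 1/2) \<partial>A) \<le> c1 * Mv + c2 * (1/(p+1))"
  proof -
    have yo: "- gg p (D x) * w \<le> c1 * \<bar>D x\<bar> powr p + c2 * \<bar>2*w\<bar> powr p" for x w
      using young_step[OF p, of "D x" "-w"] by (simp add: c1_def c2_def)
    show ?thesis using side_bound[OF cop2 mk2 p h2m _ phim phib c yo] hb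
      unfolding m2 Mv_def by simp
  qed
  have intb: "integrable A f" if "f \<in> borel_measurable borel" "\<And>x. \<bar>f x\<bar> \<le> B" for f :: "_ \<Rightarrow> real" and B
    by (rule integrable_const_bound[where B=B]) (use that in \<open>auto simp: measurable_cong_sets[OF sA refl]\<close>)
  have RKb: "\<bar>RK K x - 1/2\<bar> \<le> 1" if "markov_kernel_of C K" for C K x
    using RK_bounds[OF that, of x] by auto
  have i1: "integrable A (\<lambda>x. gg p (D x) * (RK K1 x - 1/2))"
    by (rule intb[of _ 1]) (use RK_meas[OF mk1] in measurable,
        use hb RKb[OF mk1] in \<open>auto simp: abs_mult intro: mult_le_one\<close>)
  have i2: "integrable A (\<lambda>x. - gg p (D x) * (RK K2 x - 1/2))"
    by (rule intb[of _ 1]) (use RK_meas[OF mk2] in measurable,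
        use hb RKb[OF mk2] in \<open>auto simp: abs_mult intro: mult_le_one\<close>)
  have "Mv = (\<integral> x. gg p (D x) * (RK K1 x - 1/2) + - gg p (D x) * (RK K2 x - 1/2) \<partial>A)"
    unfolding Mv_def
    by (rule Bochner_Integration.integral_cong[OF refl]) (simp add: gg_mult[symmetric] D_def algebra_simps)
  also have "\<dots> = (\<integral> x. gg p (D x) * (RK K1 x - 1/2) \<partial>A) + (\<integral> x. - gg p (D x) * (RK K2 x - 1/2) \<partial>A)"
    by (rule Bochner_Integration.integral_add[OF i1 i2])
  finally have ineq: "Mv \<le> 2 * c1 * Mv + 2 * c2 * (1/(p+1))" using s1 s2 by simp
  have e1: "2 * c1 = 1 - 1/p" by (simp add: c1_def)
  have e2: "2 * c2 = 1/p" by (simp add: c2_def)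
  have "Mv \<le> (1 - 1/p) * Mv + (1/p) * (1/(p+1))" using ineq unfolding e1 e2 .
  then have l: "Mv * (1/p) \<le> (1/p) * (1/(p+1))" by (simp add: algebra_simps)
  have pp: "0 < p" using p by simp
  have "Mv = p * (Mv * (1/p))" using pp by simp
  also have "\<dots> \<le> p * ((1/p) * (1/(p+1)))" by (rule mult_left_mono[OF l]) (use pp in simp)
  also have "\<dots> = 1/(p+1)" using pp by simp
  finally have Mle: "Mv \<le> 1/(p+1)" .
  have Mnn: "0 \<le> Mv" unfolding Mv_def by (rule Bochner_Integration.integral_nonneg) simp
  have iM: "integrable A (\<lambda>x. \<bar>D x\<bar> powr p)"
    by (rule intb[of _ 1]) (use phim in simp, use phib in auto)
  have "(\<integral>\<^sup>+ x. ennreal (\<bar>regression K1 x - regression K2 x\<bar> powr p) \<partial>A)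
      = (\<integral>\<^sup>+ x. ennreal (\<bar>D x\<bar> powr p) \<partial>A)"
  proof (rule nn_integral_cong_AE)
    have a1: "AE x in A. regression K1 x = RK K1 x" using reg_eq_RK[OF cop1 mk1] unfolding m1 .
    have a2: "AE x in A. regression K2 x = RK K2 x" using reg_eq_RK[OF cop2 mk2] unfolding m2 .
    show "AE x in A. ennreal (\<bar>regression K1 x - regression K2 x\<bar> powr p) = ennreal (\<bar>D x\<bar> powr p)"
      using a1 a2 by eventually_elim (simp add: D_def)
  qed
  also have "\<dots> = ennreal Mv" unfolding Mv_def by (rule nn_integral_eq_integral[OF iM]) simp
  finally have "Lp_norm_A A p (\<lambda>x. regression K1 x - regression K2 x) = Mv powr (1/p)"
    using Mnn by (simp add: Lp_norm_A_def)
  also have "\<dots> \<le> (1/(p+1)) powr (1/p)" using Mle Mnn p by (intro powr_mono2) auto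
  also have "\<dots> = (p + 1) powr (- 1 / p)" using p
    by (simp add: powr_minus_divide powr_divide)
  finally show ?thesis .
qed


lemma det_copula:
  fixes A :: "(real^'n) measure"
  assumes vec: "copula_measure_vec A" and \<phi>m: "\<phi> \<in> borel_measurable borel"
    and \<phi>u: "distr A lborel \<phi> = unif01"
  shows "distr A borel (\<lambda>x. (x, \<phi> x)) \<in> copulas_with_marg A"
    "markov_kernel_of (distr A borel (\<lambda>x. (x, \<phi> x))) (\<lambda>x. return borel (\<phi> x))"
    "regression (\<lambda>x. return borel (\<phi> x)) x = \<phi> x"
proof -
  let ?C = "distr A borel (\<lambda>x. (x, \<phi> x))"
  have sA: "sets A = sets borel" using vec by (simp add: copula_measure_vec_def)
  have pA: "prob_space A" using vec by (simp add: copula_measure_vec_def)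
  have \<phi>mA: "\<phi> \<in> borel_measurable A" using \<phi>m by (simp add: measurable_cong_sets[OF sA refl])
  have Tm: "(\<lambda>x. (x, \<phi> x)) \<in> A \<rightarrow>\<^sub>M borel"
    unfolding borel_prod[symmetric] using \<phi>mA
    by (intro measurable_Pair) (simp_all add: measurable_cong_sets[OF sA refl])
  have fstm: "fst \<in> (borel :: ((real^'n) \<times> real) measure) \<rightarrow>\<^sub>M borel"
    by (simp add: borel_prod[symmetric])
  have sndm: "snd \<in> (borel :: ((real^'n) \<times> real) measure) \<rightarrow>\<^sub>M lborel"
    by (simp add: borel_prod[symmetric])
  have coordm: "(\<lambda>z. fst z $ i) \<in> (borel :: ((real^'n) \<times> real) measure) \<rightarrow>\<^sub>M lborel" for i
    unfolding borel_prod[symmetric] by (rule measurable_compose[OF measurable_fst]) simp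
  have cop: "copula_measure ?C"
    unfolding copula_measure_def
  proof (intro conjI allI)
    show "sets ?C = sets borel" by simp
    show "prob_space ?C" using pA Tm by (rule prob_space.prob_space_distr)
    fix i
    have "distr ?C lborel (\<lambda>z. fst z $ i) = distr A lborel ((\<lambda>z. fst z $ i) \<circ> (\<lambda>x. (x, \<phi> x)))"
      by (rule distr_distr[OF coordm Tm])
    also have "\<dots> = distr A lborel (\<lambda>x. x $ i)" by (simp add: o_def)
    also have "\<dots> = unif01" using vec by (simp add: copula_measure_vec_def)
    finally show "distr ?C lborel (\<lambda>z. fst z $ i) = unif01" .
  next
    have "distr ?C lborel snd = distr A lborel (snd \<circ> (\<lambda>x. (x, \<phi> x)))"
      by (rule distr_distr[OF sndm Tm])
    also have "\<dots> = unif01" using \<phi>u by (simp add: o_def)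
    finally show "distr ?C lborel snd = unif01" .
  qed
  have marg: "marg_first ?C = A"
  proof -
    have "marg_first ?C = distr A borel (fst \<circ> (\<lambda>x. (x, \<phi> x)))"
      unfolding marg_first_def by (rule distr_distr[OF fstm Tm])
    also have "\<dots> = A" by (simp add: o_def distr_id2[OF sA[symmetric]])
    finally show ?thesis .
  qed
  show "?C \<in> copulas_with_marg A" using cop marg by (simp add: copulas_with_marg_def)
  show "markov_kernel_of ?C (\<lambda>x. return borel (\<phi> x))"
    unfolding markov_kernel_of_def
  proof (intro conjI ballI)
    show "(\<lambda>x. return borel (\<phi> x)) \<in> borel \<rightarrow>\<^sub>M prob_algebra borel"
      by (rule measurable_compose[OF \<phi>m measurable_return_prob_space])
    fix B :: "(real^'n) set" and F :: "real set" assume B: "B \<in> sets borel" and F: "F \<in> sets borel"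
    have BF: "B \<times> F \<in> sets (borel :: ((real^'n) \<times> real) measure)"
      using B F by (simp add: borel_prod[symmetric])
    have S: "(\<lambda>x. (x, \<phi> x)) -` (B \<times> F) \<inter> space A \<in> sets A"
      using measurable_sets[OF Tm BF] .
    have "emeasure ?C (B \<times> F) = emeasure A ((\<lambda>x. (x, \<phi> x)) -` (B \<times> F) \<inter> space A)"
      by (rule emeasure_distr[OF Tm BF])
    also have "\<dots> = (\<integral>\<^sup>+ x. indicator ((\<lambda>x. (x, \<phi> x)) -` (B \<times> F) \<inter> space A) x \<partial>A)"
      by (rule nn_integral_indicator[OF S, symmetric])
    also have "\<dots> = (\<integral>\<^sup>+ x. indicator B x * emeasure (return borel (\<phi> x)) F \<partial>A)"
      by (intro nn_integral_cong) (auto simp: F indicator_def)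
    finally show "emeasure ?C (B \<times> F) = (\<integral>\<^sup>+ x. indicator B x * emeasure (return borel (\<phi> x)) F \<partial>marg_first ?C)"
      by (simp add: marg)
  qed
  show "regression (\<lambda>x. return borel (\<phi> x)) x = \<phi> x"
    unfolding regression_def by (rule integral_return) auto
qed

lemma exist_part:
  fixes A :: "(real^'n) measure"
  assumes vec: "copula_measure_vec A" and p: "1 \<le> p"
  shows "\<exists>C1 \<in> copulas_with_marg A. \<exists>C2 \<in> copulas_with_marg A. \<exists>K1 K2.
            markov_kernel_of C1 K1 \<and> markov_kernel_of C2 K2 \<and>
            Lp_norm_A A p (\<lambda>x. regression K1 x - regression K2 x) = (p + 1) powr (- 1 / p)"
proof -
  obtain i :: 'n where True by simp
  have sA: "sets A = sets borel" using vec by (simp add: copula_measure_vec_def)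
  have u1: "distr A lborel (\<lambda>x. x $ i) = unif01" using vec by (simp add: copula_measure_vec_def)
  have m1: "(\<lambda>x::real^'n. x $ i) \<in> borel_measurable borel" by simp
  have m2: "(\<lambda>x::real^'n. 1 - x $ i) \<in> borel_measurable borel" by simp
  have m1A: "(\<lambda>x::real^'n. x $ i) \<in> A \<rightarrow>\<^sub>M lborel" using m1 by (simp add: measurable_cong_sets[OF sA refl])
  have u2: "distr A lborel (\<lambda>x. 1 - x $ i) = unif01"
  proof -
    have "distr A lborel (\<lambda>x. 1 - x $ i) = distr A lborel ((\<lambda>y::real. 1 - y) \<circ> (\<lambda>x. x $ i))"
      by (simp add: o_def)
    also have "\<dots> = distr (distr A lborel (\<lambda>x. x $ i)) lborel (\<lambda>y::real. 1 - y)"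
      by (rule distr_distr[symmetric, OF _ m1A]) simp
    also have "\<dots> = unif01" unfolding u1 by (rule unif01_reflect)
    finally show ?thesis .
  qed
  note d1 = det_copula[OF vec m1 u1] and d2 = det_copula[OF vec m2 u2]
  have "(\<integral>\<^sup>+ x. ennreal (\<bar>regression (\<lambda>x. return borel (x $ i)) x - regression (\<lambda>x. return borel (1 - x $ i)) x\<bar> powr p) \<partial>A)
      = (\<integral>\<^sup>+ x. ennreal (\<bar>2 * x $ i - 1\<bar> powr p) \<partial>A)"
    by (simp add: d1(3) d2(3) algebra_simps)
  also have "\<dots> = (\<integral>\<^sup>+ y. ennreal (\<bar>2 * y - 1\<bar> powr p) \<partial>distr A lborel (\<lambda>x. x $ i))"
    by (rule nn_integral_distr[symmetric, OF m1A]) simp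
  also have "\<dots> = ennreal (1/(p+1))" unfolding u1 by (rule unif_powr_nn[OF p])
  finally have "Lp_norm_A A p (\<lambda>x. regression (\<lambda>x. return borel (x $ i)) x - regression (\<lambda>x. return borel (1 - x $ i)) x)
      = (1/(p+1)) powr (1/p)"
    using p by (simp add: Lp_norm_A_def)
  also have "\<dots> = (p + 1) powr (- 1 / p)" using p
    by (simp add: powr_minus_divide powr_divide)
  finally show ?thesis using d1(1,2) d2(1,2) by blast
qed


theorem corollary6:
  fixes A :: "(real ^ 'n) measure" and p :: real
  assumes "copula_measure_vec A" and "1 \<le> p"
  shows "(\<forall>C1 \<in> copulas_with_marg A. \<forall>C2 \<in> copulas_with_marg A. \<forall>K1 K2.
            markov_kernel_of C1 K1 \<longrightarrow> markov_kernel_of C2 K2 \<longrightarrow>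
            Lp_norm_A A p (\<lambda>x. regression K1 x - regression K2 x) \<le> (p + 1) powr (- 1 / p))
       \<and> (\<exists>C1 \<in> copulas_with_marg A. \<exists>C2 \<in> copulas_with_marg A. \<exists>K1 K2.
            markov_kernel_of C1 K1 \<and> markov_kernel_of C2 K2 \<and>
            Lp_norm_A A p (\<lambda>x. regression K1 x - regression K2 x) = (p + 1) powr (- 1 / p))"
  using upper[OF assms] exist_part[OF assms] by blast

end
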